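(* Let $n\ge 3$. The square of the cycle, $C_n^2$, is odd prime if and only if $n\not\equiv 2 \pmod 3$.
   Context: All graphs are finite and simple. A graph $G$ of order $N$ is odd prime if there is a bijection $\ell:V(G)\to\{1,3,\ldots,2N-1\}$ with $\gcd(\ell(u),\ell(v))=1$ for every edge $uv$. For a graph $G$ and $k\ge 1$, the power $G^k$ has vertex set $V(G)$, with $u\ne v$ adjacent iff their distance in $G$ is at most $k$. $C_n$ is the cycle on $n$ vertices. *)

theory Defs
  imports Main
begin

text \<open>Graphs are given by a vertex set V and a symmetric irreflexive adjacency relation E.\<close>

definition walk :: "('a \<Rightarrow> 'a \<Rightarrow> bool) \<Rightarrow> 'a list \<Rightarrow> bool" where
  "walk E xs \<longleftrightarrow> xs \<noteq> [] \<and> (\<forall>i. Suc i < length xs \<longrightarrow> E (xs ! i) (xs ! Suc i))"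

definition dist_le :: "('a \<Rightarrow> 'a \<Rightarrow> bool) \<Rightarrow> 'a \<Rightarrow> 'a \<Rightarrow> nat \<Rightarrow> bool" where
  "dist_le E u v k \<longleftrightarrow> (\<exists>xs. walk E xs \<and> hd xs = u \<and> last xs = v \<and> length xs \<le> Suc k)"

definition graph_power :: "'a set \<Rightarrow> ('a \<Rightarrow> 'a \<Rightarrow> bool) \<Rightarrow> nat \<Rightarrow> 'a \<Rightarrow> 'a \<Rightarrow> bool" where
  "graph_power V E k u v \<longleftrightarrow> u \<in> V \<and> v \<in> V \<and> u \<noteq> v \<and> dist_le E u v k"

definition cycle_verts :: "nat \<Rightarrow> nat set" where
  "cycle_verts n = {0..<n}"

definition cycle_adj :: "nat \<Rightarrow> nat \<Rightarrow> nat \<Rightarrow> bool" where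
  "cycle_adj n i j \<longleftrightarrow> i < n \<and> j < n \<and> i \<noteq> j \<and> (j = (i + 1) mod n \<or> i = (j + 1) mod n)"

definition odd_prime :: "'a set \<Rightarrow> ('a \<Rightarrow> 'a \<Rightarrow> bool) \<Rightarrow> bool" where
  "odd_prime V E \<longleftrightarrow> (\<exists>lab :: 'a \<Rightarrow> nat.
      bij_betw lab V {m. odd m \<and> m < 2 * card V} \<and>
      (\<forall>u v. E u v \<longrightarrow> coprime (lab u) (lab v)))"

end

theory Submission
  imports Defs "HOL-Computational_Algebra.Primes"
begin

lemma mod1: "(i::nat) < n \<Longrightarrow> (i + 1) mod n = (if i + 1 = n then 0 else i + 1)"
  using mod_less[of "i + 1" n] by auto

lemma mod2: "(i::nat) < n \<Longrightarrow> 2 \<le> n \<Longrightarrow> (i + 2) mod n = (if i + 2 < n then i + 2 else i + 2 - n)"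
  using mod_less[of "i + 2" n] le_mod_geq[of n "i+2"] by (auto simp: mod_if)

lemma adj_char:
  assumes "n \<ge> 3"
  shows "cycle_adj n u v \<longleftrightarrow> u < n \<and> v < n \<and> u \<noteq> v \<and>
     (v = u + 1 \<or> u = v + 1 \<or> (u = n - 1 \<and> v = 0) \<or> (v = n - 1 \<and> u = 0))"
proof (cases "u < n \<and> v < n")
  case True
  then have h1: "(u + 1) mod n = (if u + 1 = n then 0 else u + 1)"
    and h2: "(v + 1) mod n = (if v + 1 = n then 0 else v + 1)" by (auto intro: mod1)
  show ?thesis unfolding cycle_adj_def h1 h2 using True assms by presburger
next
  case False
  then show ?thesis by (auto simp: cycle_adj_def)
qed

lemma list3:
  assumes "xs \<noteq> []" "length xs \<le> 3"
  shows "(\<exists>a. xs = [a]) \<or> (\<exists>a b. xs = [a, b]) \<or> (\<exists>a b c. xs = [a, b, c])"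
  using assms
  by (cases xs; cases "tl xs"; cases "tl (tl xs)"; cases "tl (tl (tl xs))") auto

lemma gp_imp:
  assumes n: "n \<ge> 3" and g: "graph_power (cycle_verts n) (cycle_adj n) 2 u v"
  shows "u < n \<and> v < n \<and> u \<noteq> v \<and>
     (v = u + 1 \<or> v = u + 2 \<or> u = v + 1 \<or> u = v + 2 \<or>
      (u = 0 \<and> v = n - 1) \<or> (u = 0 \<and> v = n - 2) \<or> (u = 1 \<and> v = n - 1) \<or>
      (v = 0 \<and> u = n - 1) \<or> (v = 0 \<and> u = n - 2) \<or> (v = 1 \<and> u = n - 1))"
proof -
  from g have uv: "u < n" "v < n" "u \<noteq> v"
    by (auto simp: graph_power_def cycle_verts_def)
  from g obtain xs where w: "walk (cycle_adj n) xs" "hd xs = u" "last xs = v" "length xs \<le> 3"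
    by (auto simp: graph_power_def dist_le_def)
  then have ne: "xs \<noteq> []" by (simp add: walk_def)
  from list3[OF ne w(4)] show ?thesis
  proof (elim disjE exE)
    fix a assume "xs = [a]" then show ?thesis using w uv by simp
  next
    fix a b assume xs: "xs = [a, b]"
    then have "cycle_adj n u v" using w unfolding walk_def by (auto dest: spec[of _ 0])
    then show ?thesis using adj_char[OF n] uv by auto
  next
    fix a b c assume xs: "xs = [a, b, c]"
    then have a1: "cycle_adj n u b" and a2: "cycle_adj n b v" using w unfolding walk_def
      by (auto dest: spec[of _ 0] spec[of _ 1])
    have A1: "b = u + 1 \<or> u = b + 1 \<or> (u = n - 1 \<and> b = 0) \<or> (b = n - 1 \<and> u = 0)"
      using adj_char[OF n, of u b] a1 by blast
    have A2: "v = b + 1 \<or> b = v + 1 \<or> (b = n - 1 \<and> v = 0) \<or> (v = n - 1 \<and> b = 0)"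
      using adj_char[OF n, of b v] a2 by blast
    have bn: "b < n" using adj_char[OF n, of b v] a2 by blast
    from A1 A2 have "v = u + 1 \<or> v = u + 2 \<or> u = v + 1 \<or> u = v + 2 \<or>
      (u = 0 \<and> v = n - 1) \<or> (u = 0 \<and> v = n - 2) \<or> (u = 1 \<and> v = n - 1) \<or>
      (v = 0 \<and> u = n - 1) \<or> (v = 0 \<and> u = n - 2) \<or> (v = 1 \<and> u = n - 1)"
      using uv bn n by (elim disjE conjE; presburger)
    then show ?thesis using uv by blast
  qed
qed

lemma gp_1:
  assumes n: "n \<ge> 3" "u < n" "v = (u + 1) mod n"
  shows "graph_power (cycle_verts n) (cycle_adj n) 2 u v"
proof -
  have v: "v = (if u + 1 = n then 0 else u + 1)" using n mod1 by simp
  have a: "cycle_adj n u v" using n(1,2) v by (auto simp: adj_char)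
  have "walk (cycle_adj n) [u, v]" using a by (auto simp: walk_def less_Suc_eq)
  then have "dist_le (cycle_adj n) u v 2" unfolding dist_le_def by (intro exI[of _ "[u, v]"]) auto
  then show ?thesis using a by (auto simp: graph_power_def cycle_verts_def cycle_adj_def)
qed

lemma gp_2:
  assumes n: "n \<ge> 3" "u < n" "v = (u + 2) mod n"
  shows "graph_power (cycle_verts n) (cycle_adj n) 2 u v"
proof -
  define w where "w = (if u + 1 = n then 0 else u + 1)"
  have v: "v = (if u + 2 < n then u + 2 else u + 2 - n)" using n mod2 by simp
  have a: "cycle_adj n u w" using n(1,2) by (auto simp: adj_char w_def)
  have b: "cycle_adj n w v" using n(1,2) v by (auto simp: adj_char w_def)
  have ne: "u \<noteq> v" "v < n" using n(1,2) v by auto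
  have "walk (cycle_adj n) [u, w, v]" using a b by (auto simp: walk_def less_Suc_eq nth_Cons split: nat.splits)
  then have "dist_le (cycle_adj n) u v 2" unfolding dist_le_def by (intro exI[of _ "[u, w, v]"]) auto
  then show ?thesis using ne n by (auto simp: graph_power_def cycle_verts_def)
qed

lemma cop2: "odd (a::nat) \<Longrightarrow> coprime a (a + 2)"
  by (meson coprime_def coprime_right_2_iff_odd dvd_add_right_iff)

lemma cop4: "odd (a::nat) \<Longrightarrow> coprime a (a + 4)"
  by (metis coprimeI coprime_mult_right_iff coprime_right_2_iff_odd
    double_half_numeral_Bit_0_eq(2) dvd_add_right_iff not_coprimeI
    numeral_Bit0_div_2)

lemma cop3: "\<not> 3 dvd (x::nat) \<Longrightarrow> coprime 3 x"
proof -
  have "prime (3::nat)"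
  proof -
    have "m = 1 \<or> m = 3" if "m dvd (3::nat)" for m
    proof -
      have "m \<le> 3" using that by (auto dest: dvd_imp_le)
      moreover have "m \<noteq> 0" using that by (metis dvd_0_left_iff zero_neq_numeral)
      moreover have "m \<noteq> 2" using that by auto
      ultimately show ?thesis by auto
    qed
    then show ?thesis unfolding prime_nat_iff by auto
  qed
  then show "\<not> 3 dvd (x::nat) \<Longrightarrow> coprime 3 x" by (simp add: prime_imp_coprime)
qed

lemma modlt: "(x::nat) < 2*n \<Longrightarrow> x mod n = (if x<n then x else x-n)"
  using mod_if by auto

lemma label_cop:
  assumes n: "n \<ge> 3" "n mod 3 \<noteq> 2" and g: "graph_power (cycle_verts n) (cycle_adj n) 2 u v"
  shows "coprime (2*u+1) (2*v+1)"
proof -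
  have c: "coprime (2*a+1) (2*b+1)" if "b = a + 1 \<or> b = a + 2" for a b :: nat
  proof -
    have o: "odd (2*a+1)" by simp
    from that show ?thesis
    proof
      assume "b = a + 1"
      then have e: "2*b+1 = (2*a+1)+2" by simp
      show ?thesis unfolding e by (rule cop2[OF o])
    next
      assume "b = a + 2"
      then have e: "2*b+1 = (2*a+1)+4" by simp
      show ?thesis unfolding e by (rule cop4[OF o])
    qed
  qed
  have c3: "coprime 3 (2*(n-1)+1)"
  proof (rule cop3)
    show "\<not> 3 dvd (2*(n-1)+1)" using n by presburger
  qed
  from gp_imp[OF n(1) g] have D: "v = u + 1 \<or> v = u + 2 \<or> u = v + 1 \<or> u = v + 2 \<or>
      (u = 0 \<and> v = n - 1) \<or> (u = 0 \<and> v = n - 2) \<or> (u = 1 \<and> v = n - 1) \<or>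
      (v = 0 \<and> u = n - 1) \<or> (v = 0 \<and> u = n - 2) \<or> (v = 1 \<and> u = n - 1)"
    by (rule conjunct2[OF conjunct2[OF conjunct2]])
  have c3': "coprime (2*(n-1)+1) 3" using c3 by (metis coprime_commute)
  from D show ?thesis
  proof (elim disjE)
    show ?thesis if "v = u + 1" using c that by blast
    show ?thesis if "v = u + 2" using c that by blast
    show ?thesis if "u = v + 1" using c[where a=v and b=u] that by (metis coprime_commute)
    show ?thesis if "u = v + 2" using c[where a=v and b=u] that by (metis coprime_commute)
    show ?thesis if "u = 0 \<and> v = n - 1" using that by simp
    show ?thesis if "u = 0 \<and> v = n - 2" using that by simp
    show ?thesis if "u = 1 \<and> v = n - 1" using that c3 by simp
    show ?thesis if "v = 0 \<and> u = n - 1" using that by simp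
    show ?thesis if "v = 0 \<and> u = n - 2" using that by simp
    show ?thesis if "v = 1 \<and> u = n - 1" using that c3' by simp
  qed
qed

lemma suff:
  assumes n: "n \<ge> 3" "n mod 3 \<noteq> 2"
  shows "odd_prime (cycle_verts n) (graph_power (cycle_verts n) (cycle_adj n) 2)"
  unfolding odd_prime_def
proof (intro exI[of _ "\<lambda>i. 2*i+1"] conjI allI impI)
  show "bij_betw (\<lambda>i. 2*i+1) (cycle_verts n) {m. odd m \<and> m < 2 * card (cycle_verts n)}"
    unfolding bij_betw_def
  proof
    show "inj_on (\<lambda>i::nat. 2*i+1) (cycle_verts n)" by (auto simp: inj_on_def)
    show "(\<lambda>i. 2*i+1) ` cycle_verts n = {m. odd m \<and> m < 2 * card (cycle_verts n)}"
    proof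
      show "(\<lambda>i. 2*i+1) ` cycle_verts n \<subseteq> {m. odd m \<and> m < 2 * card (cycle_verts n)}"
        by (auto simp: cycle_verts_def)
      show "{m. odd m \<and> m < 2 * card (cycle_verts n)} \<subseteq> (\<lambda>i. 2*i+1) ` cycle_verts n"
      proof
        fix m assume "m \<in> {m. odd m \<and> m < 2 * card (cycle_verts n)}"
        then have m: "odd m" "m < 2 * n" by (auto simp: cycle_verts_def)
        then have "m = 2 * (m div 2) + 1" "m div 2 < n" by presburger+
        then show "m \<in> (\<lambda>i. 2*i+1) ` cycle_verts n" unfolding cycle_verts_def
          by (intro image_eqI[of _ _ "m div 2"]) auto
      qed
    qed
  qed
  fix u v assume "graph_power (cycle_verts n) (cycle_adj n) 2 u v"
  then show "coprime (2*u+1) (2*v+1)" using label_cop n by blast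
qed

lemma shift:
  assumes n: "n \<ge> 3" "(s::nat) < n" "s' < n" "d < 3" "d' < 3" "(s + d) mod n = (s' + d') mod n"
  shows "(s = s' \<and> d = d') \<or> s' = (s + 1) mod n \<or> s' = (s + 2) mod n
     \<or> s = (s' + 1) mod n \<or> s = (s' + 2) mod n"
proof -
  have e: "(if s+d<n then s+d else s+d-n) = (if s'+d'<n then s'+d' else s'+d'-n)"
    using n modlt[of "s+d" n] modlt[of "s'+d'" n] by simp
  have c1: "s = s'" if "d = d'" using e n(1-5) that by (auto split: if_splits)
  have c2: "s' = (if s + 1 = n then 0 else s + 1)" if "d = d' + 1" using e n(1-5) that by (auto split: if_splits)
  have c3: "s' = (if s + 2 < n then s + 2 else s + 2 - n)" if "d = d' + 2" using e n(1-5) that by (auto split: if_splits)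
  have c4: "s = (if s' + 1 = n then 0 else s' + 1)" if "d' = d + 1" using e n(1-5) that by (auto split: if_splits)
  have c5: "s = (if s' + 2 < n then s' + 2 else s' + 2 - n)" if "d' = d + 2" using e n(1-5) that by (auto split: if_splits)
  have "d = d' \<or> d = d' + 1 \<or> d = d' + 2 \<or> d' = d + 1 \<or> d' = d + 2" using n(4,5) by arith
  then have "(s = s' \<and> d = d') \<or> s' = (if s + 1 = n then 0 else s + 1) \<or> s' = (if s + 2 < n then s + 2 else s + 2 - n)
     \<or> s = (if s' + 1 = n then 0 else s' + 1) \<or> s = (if s' + 2 < n then s' + 2 else s' + 2 - n)"
    using c1 c2 c3 c4 c5 by blast
  moreover have "(s + 1) mod n = (if s + 1 = n then 0 else s + 1)" using mod1 n(2) by blast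
  moreover have "(s' + 1) mod n = (if s' + 1 = n then 0 else s' + 1)" using mod1 n(3) by blast
  moreover have "(s + 2) mod n = (if s + 2 < n then s + 2 else s + 2 - n)" using mod2 n(1,2) by simp
  moreover have "(s' + 2) mod n = (if s' + 2 < n then s' + 2 else s' + 2 - n)" using mod2 n(1,3) by simp
  ultimately show ?thesis by metis
qed

lemma indep_bound:
  assumes n: "n \<ge> 3" and S: "S \<subseteq> {0..<n}"
    and ind: "\<And>s s'. s \<in> S \<Longrightarrow> s' \<in> S \<Longrightarrow> \<not> graph_power (cycle_verts n) (cycle_adj n) 2 s s'"
  shows "3 * card S \<le> n"
proof -
  have "inj_on (\<lambda>(s, d). (s + d) mod n) (S \<times> {0..<3})"
  proof (rule inj_onI, clarify)
    fix s d s' d' assume a: "s \<in> S" "d \<in> {0..<3::nat}" "s' \<in> S" "d' \<in> {0..<3::nat}"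
      "(s + d) mod n = (s' + d') mod n"
    have sl: "s < n" "s' < n" using a S by auto
    from shift[OF n sl _ _ a(5)] a(2,4)
    have "(s = s' \<and> d = d') \<or> s' = (s + 1) mod n \<or> s' = (s + 2) mod n
       \<or> s = (s' + 1) mod n \<or> s = (s' + 2) mod n" by auto
    then show "s = s' \<and> d = d'"
    proof (elim disjE)
      assume "s' = (s + 1) mod n"
      from gp_1[OF n sl(1) this] ind[OF a(1) a(3)] show ?thesis by contradiction
    next
      assume "s' = (s + 2) mod n"
      from gp_2[OF n sl(1) this] ind[OF a(1) a(3)] show ?thesis by contradiction
    next
      assume "s = (s' + 1) mod n"
      from gp_1[OF n sl(2) this] ind[OF a(3) a(1)] show ?thesis by contradiction
    next
      assume "s = (s' + 2) mod n"
      from gp_2[OF n sl(2) this] ind[OF a(3) a(1)] show ?thesis by contradiction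
    qed
  qed
  moreover have "(\<lambda>(s, d). (s + d) mod n) ` (S \<times> {0..<3}) \<subseteq> {0..<n}" using n by auto
  ultimately have "card (S \<times> {0..<3::nat}) \<le> card {0..<n}" by (intro card_inj_on_le) auto
  moreover have "finite S" using S finite_subset by blast
  ultimately show ?thesis by (simp add: card_cartesian_product)
qed

lemma nec:
  assumes n: "n \<ge> 3" "n mod 3 = 2"
    and op: "odd_prime (cycle_verts n) (graph_power (cycle_verts n) (cycle_adj n) 2)"
  shows False
proof -
  obtain lab where b: "bij_betw lab {0..<n} {m. odd m \<and> m < 2 * n}"
    and c: "\<And>u v. graph_power (cycle_verts n) (cycle_adj n) 2 u v \<Longrightarrow> coprime (lab u) (lab v)"
    using op unfolding odd_prime_def cycle_verts_def by auto
  define S where "S = {s \<in> {0..<n}. 3 dvd lab s}"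
  define T where "T = {m. odd m \<and> m < 2 * n \<and> 3 dvd m}"
  have img: "lab ` {0..<n} = {m. odd m \<and> m < 2 * n}" using b by (simp add: bij_betw_def)
  have "lab ` S = {m \<in> lab ` {0..<n}. 3 dvd m}" unfolding S_def by auto
  also have "\<dots> = T" unfolding img T_def by auto
  finally have imS: "lab ` S = T" .
  have inj: "inj_on lab S"
    by (rule inj_on_subset[OF bij_betw_imp_inj_on[OF b]]) (auto simp: S_def)
  have cST: "card S = card T" using card_image[OF inj] imS by simp
  define m where "m = n div 3"
  have m: "n = 3 * m + 2" using div_mult_mod_eq[of n 3] n(2) unfolding m_def by linarith
  have inj2: "inj_on (\<lambda>k::nat. 6*k+3) {0..m}" by (auto simp: inj_on_def)
  have sub: "(\<lambda>k::nat. 6*k+3) ` {0..m} \<subseteq> T"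
  proof
    fix x assume "x \<in> (\<lambda>k::nat. 6*k+3) ` {0..m}"
    then obtain k where k: "k \<le> m" "x = 6*k+3" by auto
    have "odd x" using k(2) by simp
    moreover have "3 dvd x" using k(2) by (simp add: dvd_def exI[of _ "2*k+1"])
    moreover have "x < 2 * n" using k m by simp
    ultimately show "x \<in> T" unfolding T_def by simp
  qed
  have fin: "finite T" unfolding T_def by auto
  have "card {0..m} \<le> card T" by (rule card_inj_on_le[OF inj2 sub fin])
  then have cT: "m + 1 \<le> card T" by simp
  have "3 * card S \<le> n"
  proof (rule indep_bound[OF n(1)])
    show "S \<subseteq> {0..<n}" unfolding S_def by auto
    fix s s' assume a: "s \<in> S" "s' \<in> S"
    show "\<not> graph_power (cycle_verts n) (cycle_adj n) 2 s s'"
    proof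
      assume "graph_power (cycle_verts n) (cycle_adj n) 2 s s'"
      then have "coprime (lab s) (lab s')" by (rule c)
      moreover have "3 dvd lab s" "3 dvd lab s'" using a unfolding S_def by auto
      ultimately show False using coprime_common_divisor_nat[of "lab s" "lab s'" 3] by auto
    qed
  qed
  then show False using cST cT m by linarith
qed

theorem theorem5p2:
  fixes n :: nat
  assumes "n \<ge> 3"
  shows "odd_prime (cycle_verts n) (graph_power (cycle_verts n) (cycle_adj n) 2)
           \<longleftrightarrow> n mod 3 \<noteq> 2"
  using suff[OF assms] nec[OF assms] by blast

end
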